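(* Let $\ell\ge2$ and let $T_\ell$ be the infinite homogeneous tree in which every vertex has $\ell$ neighbors; fix a root vertex $0$. Let $(U_e)$ be i.i.d. uniform random variables on $[0,1]$ indexed by the edges of $T_\ell$. For each vertex $x$, let $z(x)$ be the neighbor $y$ of $x$ maximizing $U_{\{x,y\}}$. Let $x_0=0$, $x_{j+1}=z(x_j)$, and $\tilde M=\min\{m\ge0:x_{m+2}=x_m\}$. Then, with $c=\frac1{\ell-1}$, for every integer $k\ge0$, $$\mathbb P(\tilde M=k)=\frac{c+k+1}{\prod_{j=2}^{k+2}(c+j)}.$$
   Context: This is the highly disordered random ferromagnet on the tree, in which each spin, when updated, copies the spin of the neighbor $z(x)$ joined to it by the strongest bond. $\tilde M$ is the number of steps from the root along the directed path $x\mapsto z(x)$ until reaching a bully bond, i.e. an edge $\{x_m,z(x_m)\}$ with $z(z(x_m))=x_m$. *)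

theory Defs
  imports "HOL-Probability.Probability"
begin

(* Vertices of the l-regular tree T_l: reduced paths from the root, encoded as
   lists with the most recent step at the head. *)

definition tree_vertex :: "nat \<Rightarrow> nat list \<Rightarrow> bool" where
  "tree_vertex l v \<longleftrightarrow> v = [] \<or> (last v < l \<and> (\<forall>i \<in> set (butlast v). i < l - 1))"

definition nbrs :: "nat \<Rightarrow> nat list \<Rightarrow> nat list set" where
  "nbrs l x = (if x = [] then {[i] | i. i < l} else {tl x} \<union> {i # x | i. i < l - 1})"

(* each edge {x,y} of the tree is identified with its endpoint farther from the root *)
definition edge_key :: "nat list \<Rightarrow> nat list \<Rightarrow> nat list" where
  "edge_key x y = (if length x < length y then y else x)"

definition zmap :: "nat \<Rightarrow> (nat list \<Rightarrow> real) \<Rightarrow> nat list \<Rightarrow> nat list" where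
  "zmap l U x = (SOME y. y \<in> nbrs l x \<and> (\<forall>y' \<in> nbrs l x. U (edge_key x y') \<le> U (edge_key x y)))"

definition zpath :: "nat \<Rightarrow> (nat list \<Rightarrow> real) \<Rightarrow> nat \<Rightarrow> nat list" where
  "zpath l U j = (zmap l U ^^ j) []"

definition has_bully :: "nat \<Rightarrow> (nat list \<Rightarrow> real) \<Rightarrow> bool" where
  "has_bully l U \<longleftrightarrow> (\<exists>m. zpath l U (m + 2) = zpath l U m)"

definition Mtilde :: "nat \<Rightarrow> (nat list \<Rightarrow> real) \<Rightarrow> nat" where
  "Mtilde l U = (LEAST m. zpath l U (m + 2) = zpath l U m)"

definition edge_weights :: "(nat list \<Rightarrow> real) measure" where
  "edge_weights = PiM UNIV (\<lambda>_. uniform_measure lborel {0..1::real})"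

end

theory Submission
  imports Defs
begin


abbreviation U01 :: "real measure" where "U01 \<equiv> uniform_measure lborel {0..1::real}"

lemma prob_space_U01: "prob_space U01"
  by (intro prob_space_uniform_measure) auto

interpretation PS: product_prob_space "\<lambda>_::nat list. U01" "UNIV :: nat list set"
  unfolding product_prob_space_def product_prob_space_axioms_def product_sigma_finite_def
  by (blast intro: prob_space_U01 prob_space_imp_sigma_finite)

lemma lborel_pow:
  assumes "0 \<le> s"
  shows "(\<integral>\<^sup>+t. ennreal (t^m) * indicator {0..<s} t \<partial>lborel) = ennreal (s^Suc m / Suc m)"
proof -
  have "(\<integral>\<^sup>+t. ennreal (t^m) * indicator {0..<s} t \<partial>lborel) = (\<integral>\<^sup>+t. ennreal (t^m) * indicator {0..s} t \<partial>lborel)"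
    by (intro nn_integral_cong_AE) (use AE_lborel_singleton[of s] in \<open>auto split: split_indicator\<close>)
  also have "\<dots> = ennreal (s^Suc m / Suc m - 0^Suc m / Suc m)"
  proof (rule nn_integral_FTC_Icc[where F="\<lambda>t. t^Suc m / Suc m"])
    fix t :: real show "DERIV (\<lambda>t. t^Suc m / Suc m) t :> t^m"
      by (intro derivative_eq_intros) (auto simp: field_simps simp del: of_nat_Suc)
  qed (auto simp: assms)
  finally show ?thesis by simp
qed

lemma U01_pow:
  assumes "s \<in> {0..1}"
  shows "(\<integral>\<^sup>+t. ennreal (t^m) * indicator {..<s} t \<partial>U01) = ennreal (s^Suc m / Suc m)"
proof -
  have "(\<integral>\<^sup>+t. ennreal (t^m) * indicator {..<s} t \<partial>U01) =
     (\<integral>\<^sup>+t. ennreal (t^m) * indicator {..<s} t * indicator {0..1} t \<partial>lborel) / emeasure lborel {0..1::real}"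
    by (rule nn_integral_uniform_measure) auto
  also have "(\<lambda>t. ennreal (t^m) * indicator {..<s} t * indicator {0..1} t) = (\<lambda>t. ennreal (t^m) * indicator {0..<s} t)"
    using assms by (auto simp: fun_eq_iff split: split_indicator)
  finally show ?thesis using lborel_pow[of s m] assms by (simp add: divide_ennreal_def)
qed

lemma U01_lt:
  assumes "t \<in> {0..1}"
  shows "emeasure U01 {..<t} = ennreal t"
proof -
  have "{0..1} \<inter> {..<t} = {0..<t}" using assms by auto
  then show ?thesis using assms by (simp add: divide_ennreal_def)
qed

lemma U01_pt: "emeasure U01 {t} = 0"
  using emeasure_lborel_countable[of "{0..1} \<inter> {t::real}"] by simp

lemma AE_U01: "AE t in U01. t \<in> {0..1}"
  by (rule AE_uniform_measureI) auto

lemma U01_prod_lt: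
  assumes "finite C" "t \<in> {0..1}"
  shows "(\<integral>\<^sup>+y. (\<Prod>c\<in>C. indicator {..<t} (y c)) \<partial>PiM C (\<lambda>_::nat list. U01)) = ennreal (t ^ card C)"
proof -
  have "(\<integral>\<^sup>+y. (\<Prod>c\<in>C. indicator {..<t} (y c)) \<partial>PiM C (\<lambda>_::nat list. U01)) = (\<Prod>c\<in>C. \<integral>\<^sup>+s. indicator {..<t} s \<partial>U01)"
    by (rule PS.product_nn_integral_prod) (use assms in auto)
  also have "\<dots> = (\<Prod>c\<in>C. ennreal t)"
    using U01_lt[OF assms(2)] by simp
  finally show ?thesis using assms by (simp add: prod_ennreal ennreal_power)
qed

lemma step:
  fixes F :: "(nat list \<Rightarrow> real) \<Rightarrow> real \<Rightarrow> ennreal" and a :: "nat list"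
  assumes fin: "finite I" "finite C" and disj: "a \<notin> I" "a \<notin> C" "C \<inter> I = {}"
  and Fm[measurable]: "(\<lambda>(x,t). F x t) \<in> borel_measurable (PiM I (\<lambda>_. U01) \<Otimes>\<^sub>M U01)"
  shows "(\<integral>\<^sup>+x. F (restrict x I) (x a) * (\<Prod>c\<in>C. indicator {..<x a} (x c)) \<partial>PiM (insert a (C \<union> I)) (\<lambda>_. U01))
        = (\<integral>\<^sup>+t. ennreal (t ^ card C) * (\<integral>\<^sup>+x. F x t \<partial>PiM I (\<lambda>_. U01)) \<partial>U01)"
proof -
  let ?M = "\<lambda>_::nat list. U01"
  have mU: "measurable (PiM (insert a (C \<union> I)) ?M) U01 = measurable (PiM (insert a (C \<union> I)) ?M) borel"
    by (rule measurable_cong_sets) auto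
  have mj: "(\<lambda>w. w j) \<in> borel_measurable (PiM (insert a (C \<union> I)) ?M)" if "j \<in> insert a (C \<union> I)" for j
    using measurable_component_singleton[of j "insert a (C \<union> I)" ?M] that mU by simp
  have [measurable]: "Measurable.pred (PiM (insert a (C \<union> I)) ?M) (\<lambda>x. x c \<in> {..<x a})" if "c \<in> C" for c
    unfolding lessThan_iff Measurable.pred_def
    by (rule borel_measurable_less[OF mj[of c] mj[of a]]) (use that in auto)
  have m: "(\<lambda>x. F (restrict x I) (x a) * (\<Prod>c\<in>C. indicator {..<x a} (x c))) \<in> borel_measurable (PiM (insert a (C \<union> I)) ?M)"
    by measurable
  have "(\<integral>\<^sup>+x. F (restrict x I) (x a) * (\<Prod>c\<in>C. indicator {..<x a} (x c)) \<partial>PiM (insert a (C \<union> I)) ?M)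
     = (\<integral>\<^sup>+t. \<integral>\<^sup>+x. F (restrict (x(a:=t)) I) ((x(a:=t)) a) * (\<Prod>c\<in>C. indicator {..<(x(a:=t)) a} ((x(a:=t)) c)) \<partial>PiM (C \<union> I) ?M \<partial>U01)"
    by (rule PS.product_nn_integral_insert_rev) (use fin disj m in auto)
  also have "\<dots> = (\<integral>\<^sup>+t. \<integral>\<^sup>+x. F (restrict x I) t * (\<Prod>c\<in>C. indicator {..<t} (x c)) \<partial>PiM (I \<union> C) ?M \<partial>U01)"
  proof -
    have r: "restrict (x(a:=t)) I = restrict x I" for x t using disj by (auto simp: restrict_def)
    have p: "(\<Prod>c\<in>C. indicator {..<t} ((x(a:=t)) c)) = (\<Prod>c\<in>C. indicator {..<t} (x c))" for x and t :: real
      using disj by (intro prod.cong) auto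
    have u: "C \<union> I = I \<union> C" by auto
    show ?thesis by (simp only: fun_upd_same r p u)
  qed
  also have "\<dots> = (\<integral>\<^sup>+t. ennreal (t ^ card C) * (\<integral>\<^sup>+x. F x t \<partial>PiM I ?M) \<partial>U01)"
  proof (intro nn_integral_cong_AE, use AE_U01 in eventually_elim)
    case (elim t)
    have "(\<integral>\<^sup>+x. F (restrict x I) t * (\<Prod>c\<in>C. indicator {..<t} (x c)) \<partial>PiM (I \<union> C) ?M)
       = (\<integral>\<^sup>+x. \<integral>\<^sup>+y. F (restrict (merge I C (x,y)) I) t * (\<Prod>c\<in>C. indicator {..<t} (merge I C (x,y) c)) \<partial>PiM C ?M \<partial>PiM I ?M)"
      by (rule PS.product_nn_integral_fold) (use fin disj in auto)
    also have "\<dots> = (\<integral>\<^sup>+x. \<integral>\<^sup>+y. F x t * (\<Prod>c\<in>C. indicator {..<t} (y c)) \<partial>PiM C ?M \<partial>PiM I ?M)"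
    proof (intro nn_integral_cong)
      fix x y assume x: "x \<in> space (PiM I ?M)"
      have "restrict (merge I C (x,y)) I = x" using x by (auto simp: restrict_def merge_def space_PiM PiE_def extensional_def fun_eq_iff)
      moreover have "(\<Prod>c\<in>C. indicator {..<t} (merge I C (x,y) c)) = (\<Prod>c\<in>C. indicator {..<t} (y c) :: ennreal)"
        using disj by (intro prod.cong) (auto simp: merge_def)
      ultimately show "F (restrict (merge I C (x,y)) I) t * (\<Prod>c\<in>C. indicator {..<t} (merge I C (x,y) c)) = F x t * (\<Prod>c\<in>C. indicator {..<t} (y c))"
        by simp
    qed
    also have "\<dots> = (\<integral>\<^sup>+x. F x t * ennreal (t ^ card C) \<partial>PiM I ?M)"
      by (intro nn_integral_cong) (simp add: nn_integral_cmult U01_prod_lt[OF fin(2) elim])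
    also have "\<dots> = ennreal (t ^ card C) * (\<integral>\<^sup>+x. F x t \<partial>PiM I ?M)"
      by (simp add: nn_integral_multc mult.commute)
    finally show ?case .
  qed
  finally show ?thesis .
qed


lemma U01_pow1: "(\<integral>\<^sup>+t. ennreal (t^m) \<partial>U01) = ennreal (1 / Suc m)"
proof -
  have "(\<integral>\<^sup>+t. ennreal (t^m) \<partial>U01) =
     (\<integral>\<^sup>+t. ennreal (t^m) * indicator {0..1} t \<partial>lborel) / emeasure lborel {0..1::real}"
    by (rule nn_integral_uniform_measure) auto
  also have "(\<integral>\<^sup>+t. ennreal (t^m) * indicator {0..1} t \<partial>lborel) = ennreal (1^Suc m / Suc m - 0^Suc m / Suc m)"
  proof (rule nn_integral_FTC_Icc[where F="\<lambda>t. t^Suc m / Suc m"])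
    fix t :: real show "DERIV (\<lambda>t. t^Suc m / Suc m) t :> t^m"
      by (intro derivative_eq_intros) (auto simp: field_simps simp del: of_nat_Suc)
  qed auto
  finally show ?thesis by (simp add: divide_ennreal_def)
qed

type_synonym step = "nat list \<times> nat list set"

fun chainI :: "step list \<Rightarrow> nat list set" where
  "chainI [] = {}"
| "chainI ((a,C)#ss) = insert a (C \<union> chainI ss)"

fun lastlt :: "step list \<Rightarrow> (nat list \<Rightarrow> real) \<Rightarrow> real \<Rightarrow> bool" where
  "lastlt [] x t = True"
| "lastlt ((a,C)#ss) x t = (x a < t)"

fun chainG :: "step list \<Rightarrow> (nat list \<Rightarrow> real) \<Rightarrow> bool" where
  "chainG [] x = True"
| "chainG ((a,C)#ss) x = (chainG ss x \<and> (\<forall>c\<in>C. x c < x a) \<and> lastlt ss x (x a))"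

fun chainWF :: "step list \<Rightarrow> bool" where
  "chainWF [] = True"
| "chainWF ((a,C)#ss) = (chainWF ss \<and> finite C \<and> a \<notin> C \<and> a \<notin> chainI ss \<and> C \<inter> chainI ss = {})"

fun prodD :: "step list \<Rightarrow> real" where
  "prodD [] = 1"
| "prodD ((a,C)#ss) = real (card (chainI ((a,C)#ss))) * prodD ss"

lemma finite_chainI: "chainWF ss \<Longrightarrow> finite (chainI ss)"
  by (induction ss rule: chainI.induct) auto

lemma prodD_pos: "chainWF ss \<Longrightarrow> prodD ss > 0"
  by (induction ss rule: chainI.induct) (auto simp: card_gt_0_iff finite_chainI)

lemma lastlt_cong: "(\<forall>i\<in>chainI ss. x i = y i) \<Longrightarrow> lastlt ss x t = lastlt ss y t"
  by (cases "(ss,x,t)" rule: lastlt.cases) auto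

lemma chainG_cong: "(\<forall>i\<in>chainI ss. x i = y i) \<Longrightarrow> chainG ss x = chainG ss y"
proof (induction ss rule: chainI.induct)
  case (2 a C ss)
  then show ?case using lastlt_cong[of ss x y] by auto
qed simp

lemma chainG_meas:
  "chainI ss \<subseteq> J \<Longrightarrow> chainWF ss \<Longrightarrow> Measurable.pred (PiM J (\<lambda>_. U01)) (chainG ss)"
proof (induction ss rule: chainI.induct)
  case 1 then show ?case by simp
next
  case (2 a C ss)
  have mU: "measurable (PiM J (\<lambda>_::nat list. U01)) U01 = measurable (PiM J (\<lambda>_::nat list. U01)) borel"
    by (rule measurable_cong_sets) auto
  have mj: "(\<lambda>w. w j) \<in> borel_measurable (PiM J (\<lambda>_. U01))" if "j \<in> J" for j
    using measurable_component_singleton[of j J "\<lambda>_. U01"] that mU by simp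
  have lt: "Measurable.pred (PiM J (\<lambda>_. U01)) (\<lambda>x. x c < x d)" if "c \<in> J" "d \<in> J" for c d
    unfolding Measurable.pred_def by (rule borel_measurable_less[OF mj[OF that(1)] mj[OF that(2)]])
  have "finite C \<or> True" by simp
  have l: "Measurable.pred (PiM J (\<lambda>_. U01)) (\<lambda>x. lastlt ss x (x a))"
    using 2(2) by (cases ss) (auto intro!: lt)
  have c: "Measurable.pred (PiM J (\<lambda>_. U01)) (\<lambda>x. \<forall>c\<in>C. x c < x a)"
    by (rule pred_intros_countable_bounded(3)) (use 2(2) in \<open>auto intro!: lt\<close>)
  have "Measurable.pred (PiM J (\<lambda>_. U01)) (chainG ss)" using 2 by auto
  then show ?case using l c by simp
qed

lemma lastlt_meas:
  assumes "chainI ss \<subseteq> J"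
  shows "Measurable.pred (PiM J (\<lambda>_. U01) \<Otimes>\<^sub>M U01) (\<lambda>p. lastlt ss (fst p) (snd p))"
proof (cases ss)
  case Nil then show ?thesis by simp
next
  case (Cons st ss')
  obtain a C where st: "st = (a,C)" by (cases st)
  have aJ: "a \<in> J" using assms Cons st by auto
  have mU: "measurable (PiM J (\<lambda>_::nat list. U01) \<Otimes>\<^sub>M U01) U01 = measurable (PiM J (\<lambda>_::nat list. U01) \<Otimes>\<^sub>M U01) borel"
    by (rule measurable_cong_sets) auto
  have m1: "(\<lambda>p. fst p a) \<in> borel_measurable (PiM J (\<lambda>_::nat list. U01) \<Otimes>\<^sub>M U01)"
    using measurable_compose[OF measurable_fst measurable_component_singleton[of a J "\<lambda>_. U01"]] aJ mU by simp
  have m2: "(\<lambda>p. snd p) \<in> borel_measurable (PiM J (\<lambda>_::nat list. U01) \<Otimes>\<^sub>M U01)"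
    using measurable_snd[of "PiM J (\<lambda>_::nat list. U01)" U01] mU by simp
  show ?thesis unfolding Cons st lastlt.simps Measurable.pred_def
    by (rule borel_measurable_less[OF m1 m2])
qed

lemma lastlt_meas1:
  assumes "chainI ss \<subseteq> J"
  shows "Measurable.pred (PiM J (\<lambda>_. U01)) (\<lambda>x. lastlt ss x t)"
proof (cases ss)
  case Nil then show ?thesis by simp
next
  case (Cons st ss')
  obtain a C where st: "st = (a,C)" by (cases st)
  have aJ: "a \<in> J" using assms Cons st by auto
  have mU: "measurable (PiM J (\<lambda>_::nat list. U01)) U01 = measurable (PiM J (\<lambda>_::nat list. U01)) borel"
    by (rule measurable_cong_sets) auto
  have m1: "(\<lambda>x. x a) \<in> borel_measurable (PiM J (\<lambda>_::nat list. U01))"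
    using measurable_component_singleton[of a J "\<lambda>_. U01"] aJ mU by simp
  show ?thesis unfolding Cons st lastlt.simps using m1 by measurable
qed

lemma chain_ind_meas:
  assumes "chainI ss \<subseteq> J" "chainWF ss"
  shows "(\<lambda>x. if chainG ss x \<and> lastlt ss x t then 1 else 0 :: ennreal) \<in> borel_measurable (PiM J (\<lambda>_. U01))"
  using chainG_meas[OF assms] lastlt_meas1[OF assms(1), of t] by measurable

lemma prod_ind:
  assumes "finite C"
  shows "(\<Prod>c\<in>C. indicator {..<s} (x c) :: ennreal) = (if \<forall>c\<in>C. x c < s then 1 else 0)"
  using assms by (induction C rule: finite_induct) (auto simp: indicator_def)

lemma chainQ:
  "chainWF ss \<Longrightarrow> t0 \<in> {0..1} \<Longrightarrow>
   (\<integral>\<^sup>+x. (if chainG ss x \<and> lastlt ss x t0 then 1 else 0) \<partial>PiM (chainI ss) (\<lambda>_. U01)) = ennreal (t0 ^ card (chainI ss) / prodD ss)"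
proof (induction ss arbitrary: t0 rule: chainI.induct)
  case 1
  interpret P: prob_space "PiM {} (\<lambda>_::nat list. U01)" by (rule prob_space_PiM) (auto intro: prob_space_U01)
  show ?case by (simp add: P.emeasure_space_1)
next
  case (2 a C ss)
  let ?M = "\<lambda>_::nat list. U01"
  let ?I = "chainI ss"
  define F where "F y s = (if chainG ss y \<and> lastlt ss y s \<and> s < t0 then 1 else 0 :: ennreal)" for y s
  have wf: "chainWF ss" "finite C" "a \<notin> C" "a \<notin> ?I" "C \<inter> ?I = {}" using 2(2) by auto
  have finI: "finite ?I" by (rule finite_chainI[OF wf(1)])
  have Fm: "(\<lambda>(x,t). F x t) \<in> borel_measurable (PiM ?I ?M \<Otimes>\<^sub>M U01)"
  proof -
    have p1: "Measurable.pred (PiM ?I ?M \<Otimes>\<^sub>M U01) (\<lambda>p. chainG ss (fst p))"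
      using measurable_compose[OF measurable_fst chainG_meas[OF order_refl wf(1)], of U01] by (simp add: comp_def)
    have p2: "Measurable.pred (PiM ?I ?M \<Otimes>\<^sub>M U01) (\<lambda>p. lastlt ss (fst p) (snd p))"
      by (rule lastlt_meas) simp
    have p3: "Measurable.pred (PiM ?I ?M \<Otimes>\<^sub>M U01) (\<lambda>p. snd p < t0)"
      by measurable
    have "(\<lambda>p. if chainG ss (fst p) \<and> lastlt ss (fst p) (snd p) \<and> snd p < t0 then 1 else 0 :: ennreal) \<in> borel_measurable (PiM ?I ?M \<Otimes>\<^sub>M U01)"
      using p1 p2 p3 by measurable
    then show ?thesis by (simp add: F_def case_prod_beta)
  qed
  have "(\<integral>\<^sup>+x. (if chainG ((a,C)#ss) x \<and> lastlt ((a,C)#ss) x t0 then 1 else 0) \<partial>PiM (chainI ((a,C)#ss)) ?M)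
      = (\<integral>\<^sup>+x. F (restrict x ?I) (x a) * (\<Prod>c\<in>C. indicator {..<x a} (x c)) \<partial>PiM (insert a (C \<union> ?I)) ?M)"
    unfolding chainI.simps(2)
  proof (intro nn_integral_cong)
    fix x :: "nat list \<Rightarrow> real"
    have "\<forall>i\<in>?I. restrict x ?I i = x i" by simp
    then have "chainG ss (restrict x ?I) = chainG ss x" "lastlt ss (restrict x ?I) (x a) = lastlt ss x (x a)"
      using chainG_cong lastlt_cong by blast+
    then show "(if chainG ((a,C)#ss) x \<and> lastlt ((a,C)#ss) x t0 then 1 else 0) = F (restrict x ?I) (x a) * (\<Prod>c\<in>C. indicator {..<x a} (x c))"
      by (auto simp: F_def prod_ind[OF wf(2)])
  qed
  also have "\<dots> = (\<integral>\<^sup>+t. ennreal (t ^ card C) * (\<integral>\<^sup>+x. F x t \<partial>PiM ?I ?M) \<partial>U01)"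
    by (rule step[OF finI wf(2) wf(4) wf(3) wf(5) Fm])
  also have "\<dots> = (\<integral>\<^sup>+t. ennreal (1 / prodD ss) * (ennreal (t ^ (card C + card ?I)) * indicator {..<t0} t) \<partial>U01)"
  proof (intro nn_integral_cong_AE, use AE_U01 in eventually_elim)
    case (elim t)
    have "(\<integral>\<^sup>+x. F x t \<partial>PiM ?I ?M) = (\<integral>\<^sup>+x. (if chainG ss x \<and> lastlt ss x t then 1 else 0) * indicator {..<t0} t \<partial>PiM ?I ?M)"
      by (intro nn_integral_cong) (auto simp: F_def)
    also have "\<dots> = ennreal (t ^ card ?I / prodD ss) * indicator {..<t0} t"
      by (simp add: nn_integral_multc[OF chain_ind_meas[OF order_refl wf(1)]] 2(1)[OF wf(1) elim])
    finally have e: "(\<integral>\<^sup>+x. F x t \<partial>PiM ?I ?M) = ennreal (t ^ card ?I / prodD ss) * indicator {..<t0} t" .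
    have pos: "prodD ss > 0" by (rule prodD_pos[OF wf(1)])
    have "ennreal (t ^ card C) * ennreal (t ^ card ?I / prodD ss) = ennreal (1 / prodD ss) * ennreal (t ^ (card C + card ?I))"
      using elim pos by (simp add: ennreal_mult'[symmetric] power_add field_simps)
    then show ?case unfolding e by (metis (no_types) mult.assoc)
  qed
  also have "\<dots> = ennreal (1 / prodD ss) * ennreal (t0 ^ Suc (card C + card ?I) / Suc (card C + card ?I))"
    by (simp add: nn_integral_cmult U01_pow[OF 2(3)])
  also have "\<dots> = ennreal (t0 ^ card (chainI ((a,C)#ss)) / prodD ((a,C)#ss))"
  proof -
    have c: "card (insert a (C \<union> ?I)) = Suc (card C + card ?I)"
      using wf finI by (simp add: card_Un_disjoint)
    have pos: "prodD ss > 0" by (rule prodD_pos[OF wf(1)])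
    show ?thesis using pos 2(3) by (simp add: c ennreal_mult'[symmetric] field_simps del: of_nat_Suc)
  qed
  finally show ?case .
qed

lemma chainP:
  assumes "chainWF ((a,C)#ss)"
  shows "(\<integral>\<^sup>+x. (if chainG ((a,C)#ss) x then 1 else 0) \<partial>PiM (chainI ((a,C)#ss)) (\<lambda>_. U01)) = ennreal (1 / prodD ((a,C)#ss))"
proof -
  let ?M = "\<lambda>_::nat list. U01"
  let ?I = "chainI ss"
  define F where "F y s = (if chainG ss y \<and> lastlt ss y s then 1 else 0 :: ennreal)" for y s
  have wf: "chainWF ss" "finite C" "a \<notin> C" "a \<notin> ?I" "C \<inter> ?I = {}" using assms by auto
  have finI: "finite ?I" by (rule finite_chainI[OF wf(1)])
  have Fm: "(\<lambda>(x,t). F x t) \<in> borel_measurable (PiM ?I ?M \<Otimes>\<^sub>M U01)"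
  proof -
    have p1: "Measurable.pred (PiM ?I ?M \<Otimes>\<^sub>M U01) (\<lambda>p. chainG ss (fst p))"
      using measurable_compose[OF measurable_fst chainG_meas[OF order_refl wf(1)], of U01] by (simp add: comp_def)
    have p2: "Measurable.pred (PiM ?I ?M \<Otimes>\<^sub>M U01) (\<lambda>p. lastlt ss (fst p) (snd p))"
      by (rule lastlt_meas) simp
    have "(\<lambda>p. if chainG ss (fst p) \<and> lastlt ss (fst p) (snd p) then 1 else 0 :: ennreal) \<in> borel_measurable (PiM ?I ?M \<Otimes>\<^sub>M U01)"
      using p1 p2 by measurable
    then show ?thesis by (simp add: F_def case_prod_beta)
  qed
  have "(\<integral>\<^sup>+x. (if chainG ((a,C)#ss) x then 1 else 0) \<partial>PiM (chainI ((a,C)#ss)) ?M)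
      = (\<integral>\<^sup>+x. F (restrict x ?I) (x a) * (\<Prod>c\<in>C. indicator {..<x a} (x c)) \<partial>PiM (insert a (C \<union> ?I)) ?M)"
    unfolding chainI.simps(2)
  proof (intro nn_integral_cong)
    fix x :: "nat list \<Rightarrow> real"
    have "\<forall>i\<in>?I. restrict x ?I i = x i" by simp
    then have "chainG ss (restrict x ?I) = chainG ss x" "lastlt ss (restrict x ?I) (x a) = lastlt ss x (x a)"
      using chainG_cong lastlt_cong by blast+
    then show "(if chainG ((a,C)#ss) x then 1 else 0) = F (restrict x ?I) (x a) * (\<Prod>c\<in>C. indicator {..<x a} (x c))"
      by (auto simp: F_def prod_ind[OF wf(2)])
  qed
  also have "\<dots> = (\<integral>\<^sup>+t. ennreal (t ^ card C) * (\<integral>\<^sup>+x. F x t \<partial>PiM ?I ?M) \<partial>U01)"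
    by (rule step[OF finI wf(2) wf(4) wf(3) wf(5) Fm])
  also have "\<dots> = (\<integral>\<^sup>+t. ennreal (1 / prodD ss) * ennreal (t ^ (card C + card ?I)) \<partial>U01)"
  proof (intro nn_integral_cong_AE, use AE_U01 in eventually_elim)
    case (elim t)
    have e: "(\<integral>\<^sup>+x. F x t \<partial>PiM ?I ?M) = ennreal (t ^ card ?I / prodD ss)"
      unfolding F_def by (rule chainQ[OF wf(1) elim])
    have pos: "prodD ss > 0" by (rule prodD_pos[OF wf(1)])
    show ?case unfolding e
      using elim pos by (simp add: ennreal_mult'[symmetric] power_add field_simps)
  qed
  also have "\<dots> = ennreal (1 / prodD ss) * ennreal (1 / Suc (card C + card ?I))"
    by (simp add: nn_integral_cmult U01_pow1)
  also have "\<dots> = ennreal (1 / prodD ((a,C)#ss))"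
  proof -
    have c: "card (insert a (C \<union> ?I)) = Suc (card C + card ?I)"
      using wf finI by (simp add: card_Un_disjoint)
    have pos: "prodD ss > 0" by (rule prodD_pos[OF wf(1)])
    show ?thesis using pos by (simp add: c ennreal_mult'[symmetric] field_simps del: of_nat_Suc)
  qed
  finally show ?thesis .
qed



definition Bk :: "nat \<Rightarrow> nat list \<Rightarrow> nat list set" where
  "Bk l w = (if w = [] then {[i] | i. i < l} else {i # w | i. i < l - 1})"

lemma nbrs_Bk: "nbrs l w = Bk l w \<union> (if w = [] then {} else {tl w})"
  unfolding nbrs_def Bk_def by simp

lemma Bk_img: "Bk l w = (if w = [] then (\<lambda>i. [i]) ` {..<l} else (\<lambda>i. i # w) ` {..<l-1})"
  unfolding Bk_def by auto

lemma finite_Bk[simp]: "finite (Bk l w)"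
  by (simp add: Bk_img)

lemma card_Bk: "card (Bk l w) = (if w = [] then l else l - 1)"
  by (simp add: Bk_img card_image inj_on_def)

lemma Bk_mem: "y \<in> Bk l w \<Longrightarrow> y \<noteq> [] \<and> tl y = w \<and> length y = Suc (length w)"
  unfolding Bk_def by (auto split: if_splits)

lemma finite_nbrs: "finite (nbrs l w)"
  by (simp add: nbrs_Bk)

lemma nbrs_ne: "l \<ge> 2 \<Longrightarrow> nbrs l w \<noteq> {}"
proof
  assume "l \<ge> 2" "nbrs l w = {}"
  moreover have "w = [] \<Longrightarrow> [0] \<in> nbrs l w" using \<open>l \<ge> 2\<close> unfolding nbrs_def by auto
  moreover have "w \<noteq> [] \<Longrightarrow> tl w \<in> nbrs l w" unfolding nbrs_def by simp
  ultimately show False by blast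
qed

lemma key_child: "y \<in> Bk l w \<Longrightarrow> edge_key w y = y"
  using Bk_mem[of y l w] by (simp add: edge_key_def)

lemma key_parent: "w \<noteq> [] \<Longrightarrow> edge_key w (tl w) = w"
  by (cases w) (auto simp: edge_key_def)

definition StrictPick :: "nat \<Rightarrow> (nat list \<Rightarrow> real) \<Rightarrow> nat list \<Rightarrow> nat list \<Rightarrow> bool" where
  "StrictPick l U w y \<longleftrightarrow> (\<forall>y'\<in>nbrs l w. y' \<noteq> y \<longrightarrow> U (edge_key w y') < U (edge_key w y))"

definition notie :: "nat list set \<Rightarrow> (nat list \<Rightarrow> real) \<Rightarrow> bool" where
  "notie K U \<longleftrightarrow> (\<forall>e\<in>K. \<forall>e'\<in>K. e \<noteq> e' \<longrightarrow> U e \<noteq> U e')"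

lemma zmap_max:
  assumes "l \<ge> 2"
  shows "zmap l U x \<in> nbrs l x \<and> (\<forall>y'\<in>nbrs l x. U (edge_key x y') \<le> U (edge_key x (zmap l U x)))"
proof -
  let ?f = "\<lambda>y. U (edge_key x y)"
  obtain y where y: "y \<in> nbrs l x" "\<forall>y'\<in>nbrs l x. ?f y' \<le> ?f y"
    using finite_nbrs[of l x] nbrs_ne[OF assms, of x]
  proof -
    let ?m = "Max (?f ` nbrs l x)"
    have "?m \<in> ?f ` nbrs l x" using finite_nbrs[of l x] nbrs_ne[OF assms, of x] by (intro Max_in) auto
    then obtain y where "y \<in> nbrs l x" "?f y = ?m" by auto
    moreover have "\<forall>y'\<in>nbrs l x. ?f y' \<le> ?m" using finite_nbrs[of l x] by auto
    ultimately show ?thesis using that by auto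
  qed
  then show ?thesis unfolding zmap_def by (intro someI[where P="\<lambda>y. y \<in> nbrs l x \<and> (\<forall>y'\<in>nbrs l x. ?f y' \<le> ?f y)"] conjI)
qed

lemma zmap_strict:
  assumes "StrictPick l U x y" "y \<in> nbrs l x"
  shows "zmap l U x = y"
  unfolding zmap_def
proof (rule some_equality)
  show "y \<in> nbrs l x \<and> (\<forall>y'\<in>nbrs l x. U (edge_key x y') \<le> U (edge_key x y))"
    using assms by (auto simp: StrictPick_def less_imp_le)
next
  fix z assume z: "z \<in> nbrs l x \<and> (\<forall>y'\<in>nbrs l x. U (edge_key x y') \<le> U (edge_key x z))"
  show "z = y"
  proof (rule ccontr)
    assume "z \<noteq> y"
    then have "U (edge_key x z) < U (edge_key x y)" using assms z by (auto simp: StrictPick_def)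
    moreover have "U (edge_key x y) \<le> U (edge_key x z)" using z assms by auto
    ultimately show False by simp
  qed
qed

lemma key_inj:
  assumes "y \<in> nbrs l x" "y' \<in> nbrs l x" "y \<noteq> y'"
  shows "edge_key x y \<noteq> edge_key x y'"
proof -
  have k: "edge_key x z = (if z \<in> Bk l x then z else x)" if "z \<in> nbrs l x" for z
    using that unfolding nbrs_Bk by (auto simp: key_child key_parent split: if_splits dest: Bk_mem)
  have p: "z = tl x" if "z \<in> nbrs l x" "z \<notin> Bk l x" for z
    using that unfolding nbrs_Bk by (auto split: if_splits)
  show ?thesis
  proof (cases "y \<in> Bk l x"; cases "y' \<in> Bk l x")
    assume "y \<in> Bk l x" "y' \<notin> Bk l x" then show ?thesis using k assms Bk_mem[of y l x] by force
  next
    assume "y \<notin> Bk l x" "y' \<in> Bk l x" then show ?thesis using k assms Bk_mem[of y' l x] by force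
  next
    assume "y \<notin> Bk l x" "y' \<notin> Bk l x" then show ?thesis using p assms by blast
  qed (use k assms in auto)
qed

lemma keys_nbrs: "y \<in> nbrs l x \<Longrightarrow> edge_key x y \<in> Bk l x \<union> (if x = [] then {} else {x})"
  unfolding nbrs_Bk by (auto simp: key_child key_parent split: if_splits)

lemma zmap_pick:
  assumes "l \<ge> 2" "zmap l U x = y" "notie K U" "Bk l x \<union> (if x = [] then {} else {x}) \<subseteq> K"
  shows "StrictPick l U x y"
  unfolding StrictPick_def
proof (intro ballI impI)
  fix y' assume y': "y' \<in> nbrs l x" "y' \<noteq> y"
  have y: "y \<in> nbrs l x" and le: "U (edge_key x y') \<le> U (edge_key x y)"
    using zmap_max[OF assms(1), of U x] assms(2) y' by auto
  have "edge_key x y' \<noteq> edge_key x y" by (rule key_inj[OF y'(1) y y'(2)])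
  moreover have "edge_key x y' \<in> K" "edge_key x y \<in> K"
    using keys_nbrs[OF y'(1)] keys_nbrs[OF y] assms(4) by auto
  ultimately have "U (edge_key x y') \<noteq> U (edge_key x y)" using assms(3) by (auto simp: notie_def)
  then show "U (edge_key x y') < U (edge_key x y)" using le by simp
qed

fun pre :: "nat \<Rightarrow> nat list \<Rightarrow> step list" where
  "pre l [] = []"
| "pre l (i#w) = (i#w, Bk l w - {i#w}) # pre l w"

fun fin :: "nat \<Rightarrow> nat list \<Rightarrow> step list" where
  "fin l [] = []"
| "fin l (i#w) = (i#w, (Bk l w - {i#w}) \<union> Bk l (i#w)) # pre l w"

lemma pre_len: "x \<in> chainI (pre l v) \<Longrightarrow> length x \<le> length v \<and> x \<noteq> []"
proof (induction v)
  case (Cons i w)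
  then show ?case using Bk_mem[of x l w] by auto
qed simp

lemma pre_head: "v \<noteq> [] \<Longrightarrow> v \<in> chainI (pre l v)"
  by (cases v) auto

lemma pre_mono: "chainI (pre l w) \<subseteq> chainI (pre l (i#w))"
  by auto

lemma lastlt_pre: "lastlt (pre l w) U t = (w = [] \<or> U w < t)"
  by (cases w) auto

lemma wf_pre: "chainWF (pre l v)"
proof (induction v)
  case (Cons i w)
  have "i#w \<notin> chainI (pre l w)" using pre_len[of "i#w" l w] by auto
  moreover have "(Bk l w - {i#w}) \<inter> chainI (pre l w) = {}" using pre_len[of _ l w] Bk_mem[of _ l w] by fastforce
  ultimately show ?case using Cons by simp
qed simp

lemma wf_fin: "v \<noteq> [] \<Longrightarrow> chainWF (fin l v)"
proof (cases v)
  case (Cons i w)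
  have "i#w \<notin> chainI (pre l w)" using pre_len[of "i#w" l w] by auto
  moreover have "((Bk l w - {i#w}) \<union> Bk l (i#w)) \<inter> chainI (pre l w) = {}"
    using pre_len[of _ l w] Bk_mem[of _ l w] Bk_mem[of _ l "i#w"] by fastforce
  moreover have "i#w \<notin> Bk l (i#w)" using Bk_mem[of "i#w" l "i#w"] by auto
  ultimately show ?thesis using Cons wf_pre[of l w] by simp
qed simp

lemma tv_cons: "tree_vertex l (i#w) \<Longrightarrow> tree_vertex l w \<and> i#w \<in> Bk l w"
proof -
  assume a: "tree_vertex l (i#w)"
  show ?thesis
  proof (cases "w = []")
    case True then show ?thesis using a by (simp add: tree_vertex_def Bk_def)
  next
    case False
    then have "last (i#w) = last w" "butlast (i#w) = i # butlast w" by auto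
    then show ?thesis using a False by (auto simp: tree_vertex_def Bk_def)
  qed
qed

lemma tv_Bk: "tree_vertex l w \<Longrightarrow> y \<in> Bk l w \<Longrightarrow> tree_vertex l y"
  by (cases "w = []") (auto simp: tree_vertex_def Bk_def)

lemma StrictPick_alt:
  "StrictPick l U w y \<longleftrightarrow> (\<forall>c\<in>Bk l w. c \<noteq> y \<longrightarrow> U c < U (edge_key w y)) \<and> (w \<noteq> [] \<longrightarrow> tl w \<noteq> y \<longrightarrow> U w < U (edge_key w y))"
proof -
  have "StrictPick l U w y \<longleftrightarrow> (\<forall>y'\<in>Bk l w. y' \<noteq> y \<longrightarrow> U (edge_key w y') < U (edge_key w y)) \<and> (w \<noteq> [] \<longrightarrow> tl w \<noteq> y \<longrightarrow> U (edge_key w (tl w)) < U (edge_key w y))"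
    unfolding StrictPick_def nbrs_Bk by auto
  also have "(\<forall>y'\<in>Bk l w. y' \<noteq> y \<longrightarrow> U (edge_key w y') < U (edge_key w y)) \<longleftrightarrow> (\<forall>c\<in>Bk l w. c \<noteq> y \<longrightarrow> U c < U (edge_key w y))"
    by (rule ball_cong) (simp_all add: key_child)
  also have "(w \<noteq> [] \<longrightarrow> tl w \<noteq> y \<longrightarrow> U (edge_key w (tl w)) < U (edge_key w y)) \<longleftrightarrow> (w \<noteq> [] \<longrightarrow> tl w \<noteq> y \<longrightarrow> U w < U (edge_key w y))"
    using key_parent[of w] by auto
  finally show ?thesis .
qed

lemma chainG_pre:
  assumes "i#w \<in> Bk l w"
  shows "chainG (pre l (i#w)) U = (chainG (pre l w) U \<and> StrictPick l U w (i#w))"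
proof -
  have k: "edge_key w (i#w) = i#w" by (rule key_child[OF assms])
  have t: "tl w \<noteq> i#w" using length_tl[of w] by (metis Suc_n_not_le_n diff_le_self length_Cons)
  have "StrictPick l U w (i#w) \<longleftrightarrow> (\<forall>c\<in>Bk l w - {i#w}. U c < U (i#w)) \<and> (w = [] \<or> U w < U (i#w))"
    unfolding StrictPick_alt k using t by auto
  then show ?thesis by (simp add: lastlt_pre conj_assoc)
qed

lemma chainG_fin:
  shows "chainG (fin l (i#w)) U = (chainG (pre l (i#w)) U \<and> StrictPick l U (i#w) w)"
proof -
  have k: "edge_key (i#w) w = i#w" using key_parent[of "i#w"] by simp
  have "w \<notin> Bk l (i#w)" using Bk_mem[of w l "i#w"] by auto
  then have "StrictPick l U (i#w) w \<longleftrightarrow> (\<forall>c\<in>Bk l (i#w). U c < U (i#w))"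
    unfolding StrictPick_alt k by auto
  then show ?thesis by (auto simp: lastlt_pre)
qed

definition PathTo :: "nat \<Rightarrow> (nat list \<Rightarrow> real) \<Rightarrow> nat list \<Rightarrow> bool" where
  "PathTo l U v \<longleftrightarrow> (\<forall>j \<le> length v. zpath l U j = drop (length v - j) v)"

lemma zpath_Suc: "zpath l U (Suc j) = zmap l U (zpath l U j)"
  by (simp add: zpath_def)

lemma zpath_0: "zpath l U 0 = []"
  by (simp add: zpath_def)

lemma PathTo_Nil: "PathTo l U []"
  by (simp add: PathTo_def zpath_0)

lemma PathTo_cons: "PathTo l U (i#w) \<longleftrightarrow> PathTo l U w \<and> zmap l U w = i#w"
proof
  assume a: "PathTo l U (i#w)"
  have 1: "zpath l U j = drop (length w - j) w" if "j \<le> length w" for j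
    using a that unfolding PathTo_def by (auto simp: Suc_diff_le)
  have "zpath l U (Suc (length w)) = i#w" using a unfolding PathTo_def by auto
  then show "PathTo l U w \<and> zmap l U w = i#w"
    using 1[of "length w"] 1 by (auto simp: PathTo_def zpath_Suc)
next
  assume a: "PathTo l U w \<and> zmap l U w = i#w"
  show "PathTo l U (i#w)" unfolding PathTo_def
  proof (intro allI impI)
    fix j assume j: "j \<le> length (i#w)"
    show "zpath l U j = drop (length (i#w) - j) (i#w)"
    proof (cases "j \<le> length w")
      case True then show ?thesis using a unfolding PathTo_def by (auto simp: Suc_diff_le)
    next
      case False
      then have "j = Suc (length w)" using j by auto
      then show ?thesis using a unfolding PathTo_def by (auto simp: zpath_Suc)
    qed
  qed
qed

lemma strict_path:
  "tree_vertex l v \<Longrightarrow> chainG (pre l v) U \<Longrightarrow> PathTo l U v"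
proof (induction v)
  case Nil then show ?case using PathTo_Nil by blast
next
  case (Cons i w)
  have tv: "tree_vertex l w" "i#w \<in> Bk l w" using tv_cons[OF Cons(2)] by auto
  have "chainG (pre l w) U" "StrictPick l U w (i#w)" using Cons(3) chainG_pre[OF tv(2)] by auto
  moreover have "i#w \<in> nbrs l w" using tv(2) by (simp add: nbrs_Bk)
  ultimately show ?case using Cons(1) tv zmap_strict PathTo_cons by blast
qed

lemma path_strict:
  "l \<ge> 2 \<Longrightarrow> tree_vertex l v \<Longrightarrow> PathTo l U v \<Longrightarrow> notie K U \<Longrightarrow> chainI (pre l v) \<subseteq> K \<Longrightarrow> chainG (pre l v) U"
proof (induction v)
  case Nil then show ?case by simp
next
  case (Cons i w)
  have tv: "tree_vertex l w" "i#w \<in> Bk l w" using tv_cons[OF Cons(3)] by auto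
  have p: "PathTo l U w" "zmap l U w = i#w" using Cons(4) PathTo_cons by auto
  have K: "chainI (pre l w) \<subseteq> K" using Cons(6) pre_mono by blast
  have "Bk l w \<union> (if w = [] then {} else {w}) \<subseteq> K"
    using Cons(6) tv(2) pre_head[of w l] K by auto
  then have "StrictPick l U w (i#w)" by (rule zmap_pick[OF Cons(2) p(2) Cons(5)])
  then show ?case using Cons(1)[OF Cons(2) tv(1) p(1) Cons(5) K] chainG_pre[OF tv(2), of U] by blast
qed

lemma least_char:
  "(has_bully l U \<and> Mtilde l U = k) \<longleftrightarrow>
   (zpath l U (k+2) = zpath l U k \<and> (\<forall>m<k. zpath l U (m+2) \<noteq> zpath l U m))"
proof -
  define P where "P m = (zpath l U (m+2) = zpath l U m)" for m
  have hb: "has_bully l U = (\<exists>m. P m)" unfolding has_bully_def P_def by simp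
  have mt: "Mtilde l U = (LEAST m. P m)" unfolding Mtilde_def P_def by simp
  have "(\<exists>m. P m) \<and> (LEAST m. P m) = k \<longleftrightarrow> P k \<and> (\<forall>m<k. \<not> P m)"
  proof
    assume L: "(\<exists>m. P m) \<and> (LEAST m. P m) = k"
    then obtain m where "P m" by blast
    then have "P (LEAST m. P m)" by (rule LeastI)
    moreover have "\<And>m. m < (LEAST m. P m) \<Longrightarrow> \<not> P m" by (rule not_less_Least)
    ultimately show "P k \<and> (\<forall>m<k. \<not> P m)" using L by simp
  next
    assume R: "P k \<and> (\<forall>m<k. \<not> P m)"
    have "(LEAST m. P m) = k"
    proof (rule Least_equality)
      show "P k" using R by blast
      fix y assume "P y" then show "k \<le> y" using R leI by blast
    qed
    then show "(\<exists>m. P m) \<and> (LEAST m. P m) = k" using R by blast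
  qed
  then show ?thesis unfolding hb mt P_def by simp
qed

lemma path_grow:
  assumes l: "l \<ge> 2" and nb: "\<forall>m<K. zpath l U (m+2) \<noteq> zpath l U m"
  shows "j \<le> Suc K \<Longrightarrow> length (zpath l U j) = j \<and> tree_vertex l (zpath l U j) \<and> (j > 0 \<longrightarrow> zpath l U j \<in> Bk l (zpath l U (j-1)))"
proof (induction j)
  case 0 then show ?case by (simp add: zpath_0 tree_vertex_def)
next
  case (Suc j)
  let ?x = "zpath l U j"
  have IH: "length ?x = j" "tree_vertex l ?x" "j > 0 \<longrightarrow> ?x \<in> Bk l (zpath l U (j-1))" using Suc by auto
  have mem: "zpath l U (Suc j) \<in> nbrs l ?x" using zmap_max[OF l, of U ?x] by (simp add: zpath_Suc)
  have inB: "zpath l U (Suc j) \<in> Bk l ?x"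
  proof (rule ccontr)
    assume nB: "zpath l U (Suc j) \<notin> Bk l ?x"
    then have ne: "?x \<noteq> []" and eq: "zpath l U (Suc j) = tl ?x" using mem unfolding nbrs_Bk by (auto split: if_splits)
    then have j0: "j > 0" using IH(1) by (cases j) auto
    then have "tl ?x = zpath l U (j-1)" using IH(3) Bk_mem by blast
    then have "zpath l U ((j-1)+2) = zpath l U (j-1)" using eq j0 by simp
    moreover have "j - 1 < K" using Suc.prems j0 by auto
    ultimately show False using nb by blast
  qed
  show ?case using inB Bk_mem[OF inB] IH tv_Bk[OF IH(2) inB] by auto
qed

lemma path_drop:
  assumes "\<forall>j. 0 < j \<and> j \<le> Suc K \<longrightarrow> tl (zpath l U j) = zpath l U (j-1)"
  shows "d \<le> Suc K \<Longrightarrow> zpath l U (Suc K - d) = drop d (zpath l U (Suc K))"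
proof (induction d)
  case 0 then show ?case by simp
next
  case (Suc d)
  have "zpath l U (Suc K - Suc d) = tl (zpath l U (Suc K - d))"
    using assms[rule_format, of "Suc K - d"] Suc.prems by (simp add: Suc_diff_Suc)
  also have "\<dots> = tl (drop d (zpath l U (Suc K)))" using Suc by simp
  finally show ?case by (simp add: drop_Suc tl_drop)
qed

lemma event_iff:
  assumes l: "l \<ge> 2" and tv: "tree_vertex l v" and len: "length v = Suc k"
  shows "(has_bully l U \<and> Mtilde l U = k \<and> zpath l U (Suc k) = v) \<longleftrightarrow> PathTo l U v \<and> zmap l U v = tl v"
proof
  assume a: "has_bully l U \<and> Mtilde l U = k \<and> zpath l U (Suc k) = v"
  then have P: "zpath l U (k+2) = zpath l U k" and nb: "\<forall>m<k. zpath l U (m+2) \<noteq> zpath l U m"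
    using least_char by blast+
  have g: "j \<le> Suc k \<Longrightarrow> length (zpath l U j) = j \<and> tree_vertex l (zpath l U j) \<and> (j > 0 \<longrightarrow> zpath l U j \<in> Bk l (zpath l U (j-1)))" for j
    by (rule path_grow[OF l nb])
  have "\<forall>j. 0 < j \<and> j \<le> Suc k \<longrightarrow> tl (zpath l U j) = zpath l U (j-1)"
    using g Bk_mem by blast
  then have d: "d \<le> Suc k \<Longrightarrow> zpath l U (Suc k - d) = drop d v" for d
    using path_drop[of k l U d] a by simp
  have pt: "PathTo l U v" unfolding PathTo_def
  proof (intro allI impI)
    fix j assume "j \<le> length v"
    then show "zpath l U j = drop (length v - j) v" using d[of "Suc k - j"] len by simp
  qed
  have "zmap l U v = zpath l U (k+2)" using a by (simp add: zpath_Suc)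
  also have "\<dots> = drop 1 v" using P d[of 1] by simp
  finally show "PathTo l U v \<and> zmap l U v = tl v" using pt by (simp add: drop_Suc)
next
  assume a: "PathTo l U v \<and> zmap l U v = tl v"
  have d: "j \<le> Suc k \<Longrightarrow> zpath l U j = drop (Suc k - j) v" for j
    using a len unfolding PathTo_def by auto
  have v: "zpath l U (Suc k) = v" using d[of "Suc k"] by simp
  have "zpath l U (k+2) = tl v" using a v by (simp add: zpath_Suc)
  also have "\<dots> = zpath l U k" using d[of k] by (simp add: drop_Suc)
  finally have P: "zpath l U (k+2) = zpath l U k" .
  have "\<forall>m<k. zpath l U (m+2) \<noteq> zpath l U m"
  proof (intro allI impI)
    fix m assume m: "m < k"
    have "length (zpath l U (m+2)) = m + 2" using d[of "m+2"] m len by simp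
    moreover have "length (zpath l U m) = m" using d[of m] m len by simp
    ultimately show "zpath l U (m+2) \<noteq> zpath l U m" by auto
  qed
  then show "has_bully l U \<and> Mtilde l U = k \<and> zpath l U (Suc k) = v" using P v least_char by blast
qed

lemma event_V:
  assumes l: "l \<ge> 2" and a: "has_bully l U \<and> Mtilde l U = k"
  shows "tree_vertex l (zpath l U (Suc k)) \<and> length (zpath l U (Suc k)) = Suc k"
proof -
  have nb: "\<forall>m<k. zpath l U (m+2) \<noteq> zpath l U m" using a least_char by blast
  show ?thesis using path_grow[OF l nb, of "Suc k"] by simp
qed



lemma sp_ew: "space edge_weights = space (PiM (UNIV::nat list set) (\<lambda>_. U01))"
  by (simp add: edge_weights_def)

lemma comp_meas[measurable]: "(\<lambda>U. U e) \<in> borel_measurable edge_weights"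
proof -
  have mU: "measurable edge_weights U01 = measurable edge_weights borel"
    by (rule measurable_cong_sets) auto
  show ?thesis using measurable_component_singleton[of e UNIV "\<lambda>_. U01"] mU
    unfolding edge_weights_def by simp
qed

lemma comp_le[measurable]: "Measurable.pred edge_weights (\<lambda>U. U a \<le> U b)"
  unfolding Measurable.pred_def by (rule borel_measurable_le[OF comp_meas comp_meas])

lemma zmap_meas[measurable]: "(\<lambda>U. zmap l U x) \<in> measurable edge_weights (count_space UNIV)"
proof (subst measurable_count_space_eq2_countable, intro conjI ballI)
  show "(\<lambda>U. zmap l U x) \<in> space edge_weights \<rightarrow> UNIV" by simp
  fix y :: "nat list"
  let ?N = "nbrs l x"
  define S where "S U = {z\<in>?N. \<forall>y'\<in>?N. U (edge_key x y') \<le> U (edge_key x z)}" for U :: "nat list \<Rightarrow> real"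
  have z: "zmap l U x = (SOME z. z \<in> S U)" for U unfolding zmap_def S_def by simp
  have eq: "(\<lambda>U. zmap l U x) -` {y} \<inter> space edge_weights =
      (\<Union>T\<in>{T. T \<subseteq> ?N \<and> (SOME z. z \<in> T) = y}. {U\<in>space edge_weights. \<forall>z\<in>?N. (z \<in> T \<longleftrightarrow> (\<forall>y'\<in>?N. U (edge_key x y') \<le> U (edge_key x z)))})"
  proof (intro set_eqI iffI)
    fix U assume "U \<in> (\<lambda>U. zmap l U x) -` {y} \<inter> space edge_weights"
    then show "U \<in> (\<Union>T\<in>{T. T \<subseteq> ?N \<and> (SOME z. z \<in> T) = y}. {U\<in>space edge_weights. \<forall>z\<in>?N. (z \<in> T \<longleftrightarrow> (\<forall>y'\<in>?N. U (edge_key x y') \<le> U (edge_key x z)))})"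
      by (intro UN_I[of "S U"]) (auto simp: z S_def)
  next
    fix U assume "U \<in> (\<Union>T\<in>{T. T \<subseteq> ?N \<and> (SOME z. z \<in> T) = y}. {U\<in>space edge_weights. \<forall>z\<in>?N. (z \<in> T \<longleftrightarrow> (\<forall>y'\<in>?N. U (edge_key x y') \<le> U (edge_key x z)))})"
    then obtain T where T: "T \<subseteq> ?N" "(SOME z. z \<in> T) = y" "U \<in> space edge_weights"
      "\<forall>z\<in>?N. (z \<in> T \<longleftrightarrow> (\<forall>y'\<in>?N. U (edge_key x y') \<le> U (edge_key x z)))" by blast
    have "S U = T" using T(1,4) unfolding S_def by auto
    then show "U \<in> (\<lambda>U. zmap l U x) -` {y} \<inter> space edge_weights" using T by (simp add: z)
  qed
  have fin: "finite {T. T \<subseteq> ?N \<and> (SOME z. z \<in> T) = y}"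
    using finite_nbrs[of l x] by (rule finite_subset[rotated, OF finite_Collect_subsets]) auto
  show "(\<lambda>U. zmap l U x) -` {y} \<inter> space edge_weights \<in> sets edge_weights"
    unfolding eq
  proof (rule sets.finite_UN[OF fin])
    fix T
    show "{U\<in>space edge_weights. \<forall>z\<in>?N. (z \<in> T \<longleftrightarrow> (\<forall>y'\<in>?N. U (edge_key x y') \<le> U (edge_key x z)))} \<in> sets edge_weights"
      by measurable
  qed
qed

lemma zpath_meas[measurable]: "(\<lambda>U. zpath l U j) \<in> measurable edge_weights (count_space UNIV)"
proof (induction j)
  case 0 then show ?case by (simp add: zpath_0)
next
  case (Suc j)
  have "(\<lambda>U. (\<lambda>x U. zmap l U x) (zpath l U j) U) \<in> measurable edge_weights (count_space UNIV)"
    by (rule measurable_compose_countable[OF zmap_meas Suc])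
  then show ?case by (simp add: zpath_Suc)
qed

lemma zpath_eq_meas: "Measurable.pred edge_weights (\<lambda>U. zpath l U a = zpath l U b)"
proof -
  have "(\<lambda>U. (\<lambda>y U. zpath l U a = y) (zpath l U b) U) \<in> measurable edge_weights (count_space UNIV)"
    by (rule measurable_compose_countable[OF _ zpath_meas]) measurable
  then show ?thesis by simp
qed

lemma Av_meas:
  "{U\<in>space edge_weights. has_bully l U \<and> Mtilde l U = k \<and> zpath l U (Suc k) = v} \<in> sets edge_weights"
proof -
  have "{U\<in>space edge_weights. has_bully l U \<and> Mtilde l U = k \<and> zpath l U (Suc k) = v} =
        {U\<in>space edge_weights. zpath l U (k+2) = zpath l U k \<and> (\<forall>m\<in>{..<k}. zpath l U (m+2) \<noteq> zpath l U m) \<and> zpath l U (Suc k) = v}"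
    using least_char by auto
  also have "\<dots> \<in> sets edge_weights"
    using zpath_eq_meas by measurable
  finally show ?thesis .
qed

lemma pcomp: "j \<in> J \<Longrightarrow> (\<lambda>x. x j) \<in> borel_measurable (PiM J (\<lambda>_::nat list. U01))"
proof -
  assume j: "j \<in> J"
  have mU: "measurable (PiM J (\<lambda>_::nat list. U01)) U01 = measurable (PiM J (\<lambda>_::nat list. U01)) borel"
    by (rule measurable_cong_sets) auto
  show ?thesis using measurable_component_singleton[of j J "\<lambda>_. U01"] j mU by simp
qed

lemma transfer:
  assumes fin: "finite J" and S: "{x\<in>space (PiM J (\<lambda>_. U01)). P x} \<in> sets (PiM J (\<lambda>_. U01))"
  shows "emeasure edge_weights {U\<in>space edge_weights. P (restrict U J)} = emeasure (PiM J (\<lambda>_. U01)) {x\<in>space (PiM J (\<lambda>_. U01)). P x}"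
proof -
  let ?M = "\<lambda>_::nat list. U01"
  have d: "distr edge_weights (PiM J ?M) (\<lambda>x. restrict x J) = PiM J ?M"
    unfolding edge_weights_def by (rule PS.distr_PiM_restrict_finite) (use fin in auto)
  have m: "(\<lambda>x. restrict x J) \<in> measurable edge_weights (PiM J ?M)"
    unfolding edge_weights_def by (rule measurable_restrict_subset) simp
  have "emeasure (PiM J ?M) {x\<in>space (PiM J ?M). P x} = emeasure (distr edge_weights (PiM J ?M) (\<lambda>x. restrict x J)) {x\<in>space (PiM J ?M). P x}"
    by (simp only: d)
  also have "\<dots> = emeasure edge_weights ((\<lambda>x. restrict x J) -` {x\<in>space (PiM J ?M). P x} \<inter> space edge_weights)"
    by (rule emeasure_distr[OF m S])
  also have "(\<lambda>x. restrict x J) -` {x\<in>space (PiM J ?M). P x} \<inter> space edge_weights = {U\<in>space edge_weights. P (restrict U J)}"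
    using measurable_space[OF m] by auto
  finally show ?thesis by simp
qed

lemma tie_null:
  assumes ne: "e \<noteq> e'"
  shows "emeasure edge_weights {U\<in>space edge_weights. U e = U e'} = 0"
proof -
  let ?M = "\<lambda>_::nat list. U01"
  have m1: "(\<lambda>x. x e) \<in> borel_measurable (PiM {e,e'} ?M)" by (rule pcomp) simp
  have m2: "(\<lambda>x. x e') \<in> borel_measurable (PiM {e,e'} ?M)" by (rule pcomp) simp
  have S: "{x\<in>space (PiM {e,e'} ?M). x e = x e'} \<in> sets (PiM {e,e'} ?M)"
    by (rule borel_measurable_eq[OF m1 m2])
  have "{U\<in>space edge_weights. U e = U e'} = {U\<in>space edge_weights. (\<lambda>x. x e = x e') (restrict U {e,e'})}"
    by simp
  then have "emeasure edge_weights {U\<in>space edge_weights. U e = U e'} = emeasure (PiM {e,e'} ?M) {x\<in>space (PiM {e,e'} ?M). x e = x e'}"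
    using transfer[of "{e,e'}" "\<lambda>x. x e = x e'"] S by simp
  also have "\<dots> = (\<integral>\<^sup>+x. indicator {x\<in>space (PiM {e,e'} ?M). x e = x e'} x \<partial>PiM {e,e'} ?M)"
    using S by simp
  also have "\<dots> = (\<integral>\<^sup>+x. (if x e = x e' then 1 else 0) \<partial>PiM (insert e {e'}) ?M)"
    by (intro nn_integral_cong) (auto simp: indicator_def)
  also have "\<dots> = (\<integral>\<^sup>+t. \<integral>\<^sup>+x. (if (x(e:=t)) e = (x(e:=t)) e' then 1 else 0) \<partial>PiM {e'} ?M \<partial>U01)"
  proof (rule PS.product_nn_integral_insert_rev)
    show "(\<lambda>x. if x e = x e' then 1 else 0 :: ennreal) \<in> borel_measurable (PiM (insert e {e'}) ?M)"
      using m1 m2 by measurable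
  qed (use ne in auto)
  also have "\<dots> = (\<integral>\<^sup>+t. \<integral>\<^sup>+x. (if t = x e' then 1 else 0) \<partial>PiM {e'} ?M \<partial>U01)"
    using ne by simp
  also have "\<dots> = (\<integral>\<^sup>+t. 0 \<partial>U01)"
  proof (intro nn_integral_cong)
    fix t :: real
    have "(\<integral>\<^sup>+x. (if t = x e' then 1 else 0) \<partial>PiM {e'} ?M) = (\<integral>\<^sup>+s. (if t = s then 1 else 0) \<partial>U01)"
      by (rule PS.product_nn_integral_singleton[of "\<lambda>s. if t = s then 1 else 0 :: ennreal"]) measurable
    also have "\<dots> = (\<integral>\<^sup>+s. indicator {t} s \<partial>U01)"
      by (intro nn_integral_cong) (auto simp: indicator_def)
    also have "\<dots> = 0" using U01_pt[of t] by simp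
    finally show "(\<integral>\<^sup>+x. (if t = x e' then 1 else 0) \<partial>PiM {e'} ?M) = 0" .
  qed
  finally show ?thesis by simp
qed

lemma AE_notie: "AE U in edge_weights. notie K U"
proof -
  have "AE U in edge_weights. \<forall>e\<in>UNIV. \<forall>e'\<in>UNIV. e \<noteq> e' \<longrightarrow> U e \<noteq> U e'"
  proof (intro AE_ball_countable' countableI_type)
    fix e e' :: "nat list"
    show "AE U in edge_weights. e \<noteq> e' \<longrightarrow> U e \<noteq> U e'"
    proof (cases "e = e'")
      case True then show ?thesis by simp
    next
      case False
      have "{U\<in>space edge_weights. U e = U e'} \<in> sets edge_weights" by measurable
      then have "(AE U in edge_weights. U e \<noteq> U e') \<longleftrightarrow> emeasure edge_weights {U\<in>space edge_weights. U e = U e'} = 0"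
        by (intro AE_iff_measurable) auto
      then show ?thesis using tie_null[OF False] by simp
    qed
  qed
  then show ?thesis by eventually_elim (auto simp: notie_def)
qed

lemma chainI_pre_cons:
  assumes "i#w \<in> Bk l w"
  shows "chainI (pre l (i#w)) = Bk l w \<union> chainI (pre l w)"
  using assms by auto

lemma card_pre:
  "tree_vertex l v \<Longrightarrow> card (chainI (pre l v)) = (if v = [] then 0 else l + (length v - 1) * (l - 1))"
proof (induction v)
  case Nil then show ?case by simp
next
  case (Cons i w)
  have tv: "tree_vertex l w" "i#w \<in> Bk l w" using tv_cons[OF Cons(2)] by auto
  have disj: "Bk l w \<inter> chainI (pre l w) = {}" using pre_len[of _ l w] Bk_mem[of _ l w] by fastforce
  have "card (chainI (pre l (i#w))) = card (Bk l w) + card (chainI (pre l w))"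
    unfolding chainI_pre_cons[OF tv(2)] using disj finite_chainI[OF wf_pre[of l w]]
    by (intro card_Un_disjoint) auto
  also have "\<dots> = l + (length (i#w) - 1) * (l - 1)"
    using Cons(1)[OF tv(1)] by (cases w) (auto simp: card_Bk)
  finally show ?case by simp
qed

lemma prodD_pre:
  "tree_vertex l v \<Longrightarrow> prodD (pre l v) = (\<Prod>j<length v. real (l + j * (l - 1)))"
proof (induction v)
  case Nil then show ?case by simp
next
  case (Cons i w)
  have tv: "tree_vertex l w" using tv_cons[OF Cons(2)] by auto
  have "prodD (pre l (i#w)) = real (card (chainI (pre l (i#w)))) * prodD (pre l w)"
    by simp
  also have "\<dots> = real (l + length w * (l - 1)) * (\<Prod>j<length w. real (l + j * (l - 1)))"
    using card_pre[OF Cons(2)] Cons(1)[OF tv] by simp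
  finally show ?case by (simp add: mult.commute)
qed

lemma prodD_fin:
  assumes tv: "tree_vertex l (i#w)"
  shows "prodD (fin l (i#w)) = real (l + Suc (length w) * (l - 1)) * (\<Prod>j<length w. real (l + j * (l - 1)))"
proof -
  have tw: "tree_vertex l w" using tv_cons[OF tv] by auto
  have e: "chainI (fin l (i#w)) = Bk l (i#w) \<union> chainI (pre l (i#w))" by auto
  have disj: "Bk l (i#w) \<inter> chainI (pre l (i#w)) = {}" using pre_len[of _ l "i#w"] Bk_mem[of _ l "i#w"] by fastforce
  have "card (chainI (fin l (i#w))) = card (Bk l (i#w)) + card (chainI (pre l (i#w)))"
    unfolding e using disj finite_chainI[OF wf_pre[of l "i#w"]] by (intro card_Un_disjoint) auto
  also have "\<dots> = l + Suc (length w) * (l - 1)"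
    using card_pre[OF tv] by (simp add: card_Bk)
  finally have c: "card (chainI (fin l (i#w))) = l + Suc (length w) * (l - 1)" .
  have "prodD (fin l (i#w)) = real (card (chainI (fin l (i#w)))) * prodD (pre l w)"
    by (simp only: fin.simps prodD.simps)
  then show ?thesis using c prodD_pre[OF tw] by simp
qed

lemma Gv:
  assumes "v \<noteq> []"
  shows "emeasure edge_weights {U\<in>space edge_weights. chainG (fin l v) U} = ennreal (1 / prodD (fin l v))"
    and "{U\<in>space edge_weights. chainG (fin l v) U} \<in> sets edge_weights"
proof -
  let ?M = "\<lambda>_::nat list. U01"
  let ?J = "chainI (fin l v)"
  have wf: "chainWF (fin l v)" by (rule wf_fin[OF assms])
  have fin: "finite ?J" by (rule finite_chainI[OF wf])
  have S: "{x\<in>space (PiM ?J ?M). chainG (fin l v) x} \<in> sets (PiM ?J ?M)"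
    using chainG_meas[OF order_refl wf] unfolding Measurable.pred_def .
  have "{U\<in>space edge_weights. chainG (fin l v) U} = {U\<in>space edge_weights. chainG (fin l v) (restrict U ?J)}"
  proof -
    have "chainG (fin l v) (restrict x ?J) = chainG (fin l v) x" for x :: "nat list \<Rightarrow> real"
      by (rule chainG_cong) simp
    then show ?thesis by simp
  qed
  then have "emeasure edge_weights {U\<in>space edge_weights. chainG (fin l v) U} = emeasure (PiM ?J ?M) {x\<in>space (PiM ?J ?M). chainG (fin l v) x}"
    using transfer[OF fin S] by simp
  also have "\<dots> = (\<integral>\<^sup>+x. indicator {x\<in>space (PiM ?J ?M). chainG (fin l v) x} x \<partial>PiM ?J ?M)"
    using S by simp
  also have "\<dots> = (\<integral>\<^sup>+x. (if chainG (fin l v) x then 1 else 0) \<partial>PiM ?J ?M)"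
    by (intro nn_integral_cong) (auto simp: indicator_def)
  also have "\<dots> = ennreal (1 / prodD (fin l v))"
  proof -
    obtain i w where v: "v = i#w" using assms by (cases v) auto
    show ?thesis unfolding v fin.simps by (rule chainP) (use wf v in simp)
  qed
  finally show e: "emeasure edge_weights {U\<in>space edge_weights. chainG (fin l v) U} = ennreal (1 / prodD (fin l v))" .
  have "prodD (fin l v) > 0" by (rule prodD_pos[OF wf])
  then have "emeasure edge_weights {U\<in>space edge_weights. chainG (fin l v) U} \<noteq> 0" unfolding e by simp
  then show "{U\<in>space edge_weights. chainG (fin l v) U} \<in> sets edge_weights"
    using emeasure_notin_sets by blast
qed

lemma Av_Gv:
  assumes l: "l \<ge> 2" and tv: "tree_vertex l v" and len: "length v = Suc k"
  shows "measure edge_weights {U\<in>space edge_weights. has_bully l U \<and> Mtilde l U = k \<and> zpath l U (Suc k) = v}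
       = 1 / prodD (fin l v)"
proof -
  obtain i w where v: "v = i#w" using len by (cases v) auto
  let ?K = "chainI (fin l v)"
  have "AE U in edge_weights. (U \<in> {U\<in>space edge_weights. has_bully l U \<and> Mtilde l U = k \<and> zpath l U (Suc k) = v})
          \<longleftrightarrow> (U \<in> {U\<in>space edge_weights. chainG (fin l v) U})"
    using AE_notie[of ?K]
  proof eventually_elim
    case (elim U)
    have "(has_bully l U \<and> Mtilde l U = k \<and> zpath l U (Suc k) = v) \<longleftrightarrow> chainG (fin l v) U"
    proof -
      have "(has_bully l U \<and> Mtilde l U = k \<and> zpath l U (Suc k) = v) \<longleftrightarrow> PathTo l U v \<and> zmap l U v = w"
        using event_iff[OF l tv len] v by simp
      also have "\<dots> \<longleftrightarrow> chainG (pre l v) U \<and> StrictPick l U v w"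
      proof
        assume a: "PathTo l U v \<and> zmap l U v = w"
        have Kp: "chainI (pre l v) \<subseteq> ?K" unfolding v by auto
        have "chainG (pre l v) U" by (rule path_strict[OF l tv _ elim Kp]) (use a in simp)
        moreover have "StrictPick l U v w"
        proof (rule zmap_pick[OF l _ elim])
          show "zmap l U v = w" using a by simp
          show "Bk l v \<union> (if v = [] then {} else {v}) \<subseteq> ?K" unfolding v by auto
        qed
        ultimately show "chainG (pre l v) U \<and> StrictPick l U v w" by simp
      next
        assume a: "chainG (pre l v) U \<and> StrictPick l U v w"
        have "PathTo l U v" by (rule strict_path[OF tv]) (use a in simp)
        moreover have "zmap l U v = w"
          by (rule zmap_strict) (use a v in \<open>auto simp: nbrs_def\<close>)
        ultimately show "PathTo l U v \<and> zmap l U v = w" by simp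
      qed
      also have "\<dots> \<longleftrightarrow> chainG (fin l v) U" unfolding v by (rule chainG_fin[symmetric])
      finally show ?thesis .
    qed
    then show ?case by simp
  qed
  then have "measure edge_weights {U\<in>space edge_weights. has_bully l U \<and> Mtilde l U = k \<and> zpath l U (Suc k) = v}
       = measure edge_weights {U\<in>space edge_weights. chainG (fin l v) U}"
    by (rule measure_eq_AE[OF _ Av_meas Gv(2)]) (use v in simp_all)
  also have "\<dots> = 1 / prodD (fin l v)"
    using Gv(1)[of v l] v prodD_pos[OF wf_fin[of v l]] by (simp add: measure_def)
  finally show ?thesis .
qed

definition Vk :: "nat \<Rightarrow> nat \<Rightarrow> nat list set" where
  "Vk l m = {v. tree_vertex l v \<and> length v = m}"

lemma tv_single: "tree_vertex l [i] \<longleftrightarrow> i < l"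
  by (simp add: tree_vertex_def)

lemma tv_cons2: "w \<noteq> [] \<Longrightarrow> tree_vertex l (i#w) \<longleftrightarrow> i < l - 1 \<and> tree_vertex l w"
proof -
  assume w: "w \<noteq> []"
  then have "last (i#w) = last w" "butlast (i#w) = i # butlast w" by auto
  then show ?thesis using w by (auto simp: tree_vertex_def)
qed

lemma Vk_1: "Vk l (Suc 0) = (\<lambda>i. [i]) ` {..<l}"
proof (intro set_eqI iffI)
  fix v assume "v \<in> Vk l (Suc 0)"
  then obtain i where "v = [i]" "i < l" unfolding Vk_def
    by (cases v) (auto simp: tv_single)
  then show "v \<in> (\<lambda>i. [i]) ` {..<l}" by auto
qed (auto simp: Vk_def tv_single)

lemma Vk_Suc: "Vk l (Suc (Suc k)) = (\<lambda>(i,w). i#w) ` ({..<l-1} \<times> Vk l (Suc k))"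
proof (intro set_eqI iffI)
  fix v assume v: "v \<in> Vk l (Suc (Suc k))"
  then obtain i w where vw: "v = i#w" "length w = Suc k" unfolding Vk_def by (cases v) auto
  then have "w \<noteq> []" by auto
  then have "i < l - 1" "tree_vertex l w" using v vw tv_cons2 unfolding Vk_def by auto
  then show "v \<in> (\<lambda>(i,w). i#w) ` ({..<l-1} \<times> Vk l (Suc k))" using vw unfolding Vk_def by force
next
  fix v assume "v \<in> (\<lambda>(i,w). i#w) ` ({..<l-1} \<times> Vk l (Suc k))"
  then obtain i w where vw: "v = i#w" "i < l - 1" "tree_vertex l w" "length w = Suc k" unfolding Vk_def by auto
  then have "w \<noteq> []" by auto
  then show "v \<in> Vk l (Suc (Suc k))" using vw tv_cons2 unfolding Vk_def by auto
qed

lemma Vk_card: "finite (Vk l (Suc k)) \<and> card (Vk l (Suc k)) = l * (l - 1) ^ k"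
proof (induction k)
  case 0 then show ?case by (simp add: Vk_1 card_image inj_on_def)
next
  case (Suc k)
  have inj: "inj_on (\<lambda>(i,w). i#w) ({..<l-1} \<times> Vk l (Suc k))" by (auto simp: inj_on_def)
  show ?case unfolding Vk_Suc using Suc inj by (simp add: card_image card_cartesian_product)
qed

lemma alg:
  fixes l k :: nat
  assumes l: "l \<ge> 2"
  defines "c \<equiv> 1 / (real l - 1)"
  shows "real (l * (l - 1) ^ k) / (real (l + Suc k * (l - 1)) * (\<Prod>j<k. real (l + j * (l - 1))))
       = (c + real k + 1) / (\<Prod>j\<in>{2..k+2}. c + real j)"
proof -
  define n where "n = real l - 1"
  have n: "n > 0" "real (l - 1) = n" using l by (auto simp: n_def of_nat_diff)
  have c: "c > 0" "n * c = 1" using n unfolding c_def n_def by auto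
  have rl: "real l = n * (c + 1)" using c n unfolding n_def by (simp add: algebra_simps)
  have lj: "real (l + j * (l - 1)) = n * (c + 1 + real j)" for j
  proof -
    have "real (l + j * (l - 1)) = real l + real j * real (l - 1)" by (simp only: of_nat_add of_nat_mult)
    also have "\<dots> = n * (c + 1) + real j * n" by (simp only: n(2) rl)
    also have "\<dots> = n * (c + 1 + real j)" by (simp add: algebra_simps)
    finally show ?thesis .
  qed
  define P where "P k = (\<Prod>j<k. c + 1 + real j)" for k
  define Q where "Q k = (\<Prod>j\<in>{2..k+2}. c + real j)" for k
  have P0: "P k > 0" for k unfolding P_def using c by (intro prod_pos) auto
  have Q0: "Q k > 0" for k unfolding Q_def using c by (intro prod_pos) auto
  have PQ: "(c + 1) * Q k = P k * (c + real k + 1) * (c + real k + 2)" for k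
  proof (induction k)
    case 0 then show ?case by (simp add: P_def Q_def)
  next
    case (Suc k)
    have "Q (Suc k) = Q k * (c + real k + 3)"
      unfolding Q_def by (simp add: prod.cl_ivl_Suc add.commute add.left_commute)
    moreover have "P (Suc k) = P k * (c + 1 + real k)" unfolding P_def by simp
    ultimately show ?case using Suc by (simp add: algebra_simps)
  qed
  have e1: "(\<Prod>j<k. real (l + j * (l - 1))) = n ^ k * P k"
    unfolding lj P_def by (simp add: prod.distrib)
  have e2: "real (l + Suc k * (l - 1)) = n * (c + real k + 2)" using lj[of "Suc k"] by simp
  have e3: "real (l * (l - 1) ^ k) = n * (c + 1) * n ^ k" using rl n by simp
  have "real (l * (l - 1) ^ k) / (real (l + Suc k * (l - 1)) * (\<Prod>j<k. real (l + j * (l - 1))))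
      = n * (c + 1) * n ^ k / (n * (c + real k + 2) * (n ^ k * P k))"
    by (simp only: e1 e2 e3)
  also have "\<dots> = (c + 1) / ((c + real k + 2) * P k)"
  proof -
    have d1: "n * (c + real k + 2) * (n ^ k * P k) \<noteq> 0" using n(1) P0[of k] c(1) by (simp add: add_pos_pos)
    have d2: "(c + real k + 2) * P k \<noteq> 0" using P0[of k] c(1) by (simp add: add_pos_pos)
    show ?thesis by (simp only: frac_eq_eq[OF d1 d2]) (simp add: algebra_simps)
  qed
  also have "\<dots> = (c + real k + 1) / Q k"
  proof -
    have d2: "(c + real k + 2) * P k \<noteq> 0" using P0[of k] c(1) by (simp add: add_pos_pos)
    have dQ: "Q k \<noteq> 0" using Q0[of k] by simp
    show ?thesis by (simp only: frac_eq_eq[OF d2 dQ]) (use PQ[of k] in \<open>simp add: algebra_simps\<close>)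
  qed
  finally show ?thesis unfolding Q_def .
qed

lemma prob_ew: "prob_space edge_weights"
  unfolding edge_weights_def by (rule prob_space_PiM) (rule prob_space_U01)

theorem mainTheorem8:
  fixes l k :: nat
  assumes "l \<ge> 2"
  defines "c \<equiv> 1 / (real l - 1)"
  shows "measure edge_weights {U \<in> space edge_weights. has_bully l U \<and> Mtilde l U = k}
         = (c + real k + 1) / (\<Prod>j\<in>{2..k+2}. c + real j)"
proof -
  interpret E: prob_space edge_weights by (rule prob_ew)
  let ?A = "\<lambda>v. {U\<in>space edge_weights. has_bully l U \<and> Mtilde l U = k \<and> zpath l U (Suc k) = v}"
  let ?V = "Vk l (Suc k)"
  let ?R = "1 / (real (l + Suc k * (l - 1)) * (\<Prod>j<k. real (l + j * (l - 1))))"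
  have fv: "finite ?V" and cv: "card ?V = l * (l - 1) ^ k" using Vk_card by auto
  have seteq: "{U\<in>space edge_weights. has_bully l U \<and> Mtilde l U = k} = (\<Union>v\<in>?V. ?A v)"
    using event_V[OF assms(1)] unfolding Vk_def by auto
  have "measure edge_weights (\<Union>v\<in>?V. ?A v) = (\<Sum>v\<in>?V. measure edge_weights (?A v))"
  proof (rule E.finite_measure_finite_Union[OF fv])
    show "?A ` ?V \<subseteq> sets edge_weights" using Av_meas by blast
    show "disjoint_family_on ?A ?V" unfolding disjoint_family_on_def by auto
  qed
  also have "\<dots> = (\<Sum>v\<in>?V. ?R)"
  proof (rule sum.cong[OF refl])
    fix v assume v: "v \<in> ?V"
    then have tv: "tree_vertex l v" and len: "length v = Suc k" unfolding Vk_def by auto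
    obtain i w where vw: "v = i#w" using len by (cases v) auto
    have lw: "length w = k" using len vw by simp
    show "measure edge_weights (?A v) = ?R"
      using Av_Gv[OF assms(1) tv len] prodD_fin[of l i w] tv vw lw by simp
  qed
  also have "\<dots> = real (l * (l - 1) ^ k) * ?R" using cv by simp
  also have "\<dots> = real (l * (l - 1) ^ k) / (real (l + Suc k * (l - 1)) * (\<Prod>j<k. real (l + j * (l - 1))))"
    by simp
  also have "\<dots> = (c + real k + 1) / (\<Prod>j\<in>{2..k+2}. c + real j)"
    unfolding c_def by (rule alg[OF assms(1)])
  finally show ?thesis using seteq by simp
qed

end
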